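(* Let $m>4$ and let $\lambda=(\boldsymbol\lambda_1,\ldots,\boldsymbol\lambda_m)$ be a characteristic matrix on the convex $m$-gon with edges $F_1,\ldots,F_m$ numbered cyclically. Then $\lambda$ decomposes as a connected sum of characteristic matrices on two convex polygons; that is, there exist $1\le i<j\le m$ with $F_i\cap F_j=\emptyset$ and $\det(\boldsymbol\lambda_i,\boldsymbol\lambda_j)=\pm1$, so that $(\boldsymbol\lambda_i,\boldsymbol\lambda_{i+1},\ldots,\boldsymbol\lambda_j)$ is a characteristic matrix on the convex $(j-i+1)$-gon, $(\boldsymbol\lambda_j,\ldots,\boldsymbol\lambda_m,\boldsymbol\lambda_1,\ldots,\boldsymbol\lambda_i)$ is a characteristic matrix on the convex $(m-j+i+1)$-gon, and $\lambda$ is their connected sum.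
   Context: The edges (facets) $F_1,\ldots,F_m$ of the convex $m$-gon are numbered clockwise, so $F_i\cap F_{i+1}\neq\emptyset$ (indices mod $m$) and these are the only intersecting pairs of distinct edges. A characteristic matrix on the convex $m$-gon is an integer $2\times m$ matrix $(\boldsymbol\lambda_1,\ldots,\boldsymbol\lambda_m)$ with $\det(\boldsymbol\lambda_i,\boldsymbol\lambda_{i+1})=\pm1$ for all $i$ (indices mod $m$). Connected sum of characteristic matrices: the polygon is cut along a diagonal joining the vertices... more precisely, the $m$-gon is the connected sum of the two smaller polygons glued along the two common edges $F_i,F_j$, and the characteristic matrix of the connected sum agrees with each summand on the corresponding edges; the associated quasitoric manifold is then the connected sum of the two associated quasitoric manifolds. *)

theory Defs
  imports Main
begin

definition det2 :: "int \<times> int \<Rightarrow> int \<times> int \<Rightarrow> int" where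
  "det2 u v = fst u * snd v - snd u * fst v"

text \<open>A characteristic matrix on the convex m-gon (m = length of the list, m >= 3),
  columns listed in the cyclic order of the edges F_1,...,F_m (list index k = edge F_(k+1)).\<close>
definition char_matrix :: "(int \<times> int) list \<Rightarrow> bool" where
  "char_matrix lam \<longleftrightarrow> length lam \<ge> 3 \<and>
     (\<forall>k < length lam. det2 (lam ! k) (lam ! ((k + 1) mod length lam)) \<in> {1, -1})"

definition facets_meet :: "nat \<Rightarrow> nat \<Rightarrow> nat \<Rightarrow> bool" where
  "facets_meet m i j \<longleftrightarrow> i = j \<or> j = (i + 1) mod m \<or> i = (j + 1) mod m"

text \<open>Connected sum of characteristic matrices A (on edges G_1..G_p) and B (on edges H_1..H_q),
  glued along the common edges: last A = first B and last B = first A.\<close>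
definition connected_sum :: "(int \<times> int) list \<Rightarrow> (int \<times> int) list \<Rightarrow> (int \<times> int) list" where
  "connected_sum A B = butlast A @ butlast B"

definition glueable :: "(int \<times> int) list \<Rightarrow> (int \<times> int) list \<Rightarrow> bool" where
  "glueable A B \<longleftrightarrow> A \<noteq> [] \<and> B \<noteq> [] \<and> last A = hd B \<and> last B = hd A"

end

theory Submission imports Defs begin

lemma key_alg:
  fixes p1 p2 b1 b2 q1 q2 :: int
  assumes e1: "(p1*b2 - p2*b1)^2 = 1" and s1: "(q1*b2-q2*b1)^2 = 1"
    and pb: "p1^2+p2^2 \<le> b1^2+b2^2" and qb: "q1^2+q2^2 \<le> b1^2+b2^2"
  shows "(p1*q2-p2*q1)^2 \<le> 1"
proof (rule ccontr)
  assume nk: "\<not> (p1*q2-p2*q1)^2 \<le> 1"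
  define e where "e = p1*b2 - p2*b1"
  define s where "s = q1*b2-q2*b1"
  define k where "k = p1*q2-p2*q1"
  define A where "A = p1^2+p2^2"
  define B where "B = b1^2+b2^2"
  define c where "c = p1*b1+p2*b2"
  define N where "N = q1^2+q2^2"
  have e2: "e^2 = 1" using e1 e_def by simp
  have s2: "s^2 = 1" using s1 s_def by simp
  have id1: "e*q1 = s*p1 + k*b1" unfolding e_def s_def k_def by algebra
  have id2: "e*q2 = s*p2 + k*b2" unfolding e_def s_def k_def by algebra
  have "e^2 * N = (s*p1 + k*b1)^2 + (s*p2 + k*b2)^2"
    unfolding N_def by (metis id1 id2 power_mult_distrib distrib_left)
  also have "\<dots> = s^2*A + 2*s*k*c + k^2*B" unfolding A_def B_def c_def by algebra
  finally have NN: "N = A + 2*s*k*c + k^2*B" using e2 s2 by simp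
  have lag: "c^2 + e^2 = A*B" unfolding A_def B_def c_def e_def by algebra
  have Bpos: "B > 0"
  proof -
    have "B \<ge> 0" unfolding B_def by simp
    moreover have "B \<noteq> 0"
    proof
      assume "B = 0" then have "b1 = 0" "b2 = 0" unfolding B_def
        by (auto simp: power2_eq_square add_nonneg_eq_0_iff)
      then show False using e2 e_def by simp
    qed
    ultimately show ?thesis by simp
  qed
  have AB: "A \<le> B" using pb A_def B_def by simp
  have A0: "A \<ge> 0" unfolding A_def by simp
  have "c^2 < B^2"
  proof -
    have "c^2 = A*B - 1" using lag e2 by simp
    also have "A*B \<le> B*B" using AB Bpos by (simp add: mult_right_mono)
    finally show ?thesis by (simp add: power2_eq_square)
  qed
  then have cB: "\<bar>c\<bar> < B" using Bpos
    by (metis abs_of_pos abs_power2 power2_abs power_less_imp_less_base abs_ge_zero)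
  have k2: "\<bar>k\<bar> \<ge> 2" using nk k_def
    by (metis abs_le_square_iff abs_one not_less one_add_one zle_add1_eq_le power_one)
  have NB: "N*B = (k*B + s*c)^2 + 1"
  proof -
    have "N*B = A*B + 2*s*k*c*B + k^2*B^2" using NN by (simp add: algebra_simps power2_eq_square)
    also have "A*B = c^2 + 1" using lag e2 by simp
    finally show ?thesis using s2 by (simp add: algebra_simps power2_eq_square)
  qed
  have sc: "\<bar>s*c\<bar> = \<bar>c\<bar>" using s2 by (auto simp: abs_mult power2_eq_1_iff)
  have "\<bar>k*B\<bar> \<ge> 2*B" using k2 Bpos by (simp add: abs_mult mult_right_mono)
  then have "\<bar>k*B + s*c\<bar> \<ge> B" using sc cB by linarith
  then have "(k*B + s*c)^2 \<ge> B^2" using Bpos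
    by (metis abs_le_square_iff abs_of_pos)
  then have "N*B > B*B" using NB by (simp add: power2_eq_square)
  then have "N > B" using Bpos by simp
  then show False using qb N_def B_def by simp
qed

abbreviation U :: "int set" where "U \<equiv> {1, -1}"

lemma det2_swap: "det2 v u = - det2 u v"
  unfolding det2_def by (simp add: algebra_simps)

lemma det2_anti: "det2 u v \<in> U \<Longrightarrow> det2 v u \<in> U"
  unfolding det2_swap[of v u] by auto

lemma det2_key:
  assumes "det2 p b \<in> U" "det2 b q \<in> U"
    and "fst p^2 + snd p^2 \<le> fst b^2 + snd b^2"
    and "fst q^2 + snd q^2 \<le> fst b^2 + snd b^2"
  shows "det2 p q \<in> {1,-1,0}"
proof -
  obtain p1 p2 where p: "p = (p1,p2)" by force
  obtain b1 b2 where b: "b = (b1,b2)" by force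
  obtain q1 q2 where q: "q = (q1,q2)" by force
  have e1: "(p1*b2 - p2*b1)^2 = 1" using assms(1) p b by (auto simp: det2_def)
  have sq: "q1*b2-q2*b1 = - det2 b q" using b q by (simp add: det2_def algebra_simps)
  have s1: "(q1*b2-q2*b1)^2 = 1" unfolding sq using assms(2) by auto
  have "(p1*q2-p2*q1)^2 \<le> 1"
    by (rule key_alg[OF e1 s1]) (use assms(3,4) p b q in auto)
  then have "\<bar>p1*q2-p2*q1\<bar> \<le> 1"
    by (metis abs_le_square_iff abs_one power_one)
  then show ?thesis using p q by (auto simp: det2_def)
qed

lemma det2_zero:
  assumes "det2 p b \<in> U" "det2 b q \<in> U" "det2 p q = 0" "det2 q r \<in> U"
  shows "det2 p r \<in> U"
proof -
  obtain p1 p2 where p: "p = (p1,p2)" by force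
  obtain b1 b2 where b: "b = (b1,b2)" by force
  obtain q1 q2 where q: "q = (q1,q2)" by force
  obtain r1 r2 where r: "r = (r1,r2)" by force
  define e where "e = p1*b2 - p2*b1"
  define s where "s = q1*b2-q2*b1"
  have e2: "e = 1 \<or> e = -1" using assms(1) p b by (auto simp: det2_def e_def)
  have s2: "s = 1 \<or> s = -1" using assms(2) q b by (auto simp: det2_def s_def algebra_simps)
  have k0: "p1*q2-p2*q1 = 0" using assms(3) p q by (simp add: det2_def)
  have id1: "e*q1 = s*p1 + (p1*q2-p2*q1)*b1" unfolding e_def s_def by algebra
  have id2: "e*q2 = s*p2 + (p1*q2-p2*q1)*b2" unfolding e_def s_def by algebra
  have i1: "e*q1 = s*p1" using id1 k0 by simp
  have i2: "e*q2 = s*p2" using id2 k0 by simp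
  have d: "q1*r2 - q2*r1 \<in> U" using assms(4) q r by (simp add: det2_def)
  have "p1 = e*s*q1 \<and> p2 = e*s*q2" using e2 s2 i1 i2 by auto
  then have "p1*r2 - p2*r1 = e*s*(q1*r2 - q2*r1)" by (simp add: algebra_simps)
  then show ?thesis using e2 s2 d p r by (auto simp: det2_def)
qed

lemma char_cyc:
  assumes "char_matrix L"
  shows "det2 (L ! (k mod length L)) (L ! ((k+1) mod length L)) \<in> U"
proof -
  have n: "length L > 0" using assms unfolding char_matrix_def by auto
  have "k mod length L < length L" using n by simp
  then have "det2 (L ! (k mod length L)) (L ! ((k mod length L + 1) mod length L)) \<in> U"
    using assms unfolding char_matrix_def by blast
  then show ?thesis by (simp add: mod_Suc_eq)
qed

lemma char_intro:
  assumes "length L \<ge> 3" "\<And>k. k + 1 < length L \<Longrightarrow> det2 (L!k) (L!(k+1)) \<in> U"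
    "det2 (L!(length L - 1)) (L!0) \<in> U"
  shows "char_matrix L"
  unfolding char_matrix_def
proof (intro conjI allI impI)
  show "3 \<le> length L" by fact
  fix k assume k: "k < length L"
  show "det2 (L ! k) (L ! ((k + 1) mod length L)) \<in> U"
  proof (cases "k + 1 < length L")
    case True then show ?thesis using assms(2) by simp
  next
    case False then have "k = length L - 1" "k + 1 = length L" using k by auto
    then show ?thesis using assms(3) by simp
  qed
qed

lemma mod_ne:
  fixes x ta tb m :: nat
  assumes "ta < tb" "tb < ta + m"
  shows "(x + ta) mod m \<noteq> (x + tb) mod m"
proof
  assume h: "(x + ta) mod m = (x + tb) mod m"
  have "(x + tb) = (x + ta) + (tb - ta)" using assms by simp
  then have "(x+ta) mod m = ((x+ta) + (tb-ta)) mod m" using h by simp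
  then have "(tb - ta) mod m = 0"
    using mod_eq_dvd_iff_nat[of "x+ta" "x+ta+(tb-ta)" m] by (simp add: mod_eq_0_iff_dvd)
  then show False using assms by (simp add: mod_eq_0_iff_dvd)
qed


lemma pair_ok:
  assumes cm: "char_matrix lam" and ij: "i < j" "j < length lam"
    and nm: "\<not> facets_meet (length lam) i j" and d: "det2 (lam ! i) (lam ! j) \<in> U"
  shows "let A = take (j - i + 1) (drop i lam);
                B = drop j lam @ take (i + 1) lam
            in length A = j - i + 1 \<and> length B = length lam - j + i + 1 \<and>
               char_matrix A \<and> char_matrix B \<and> glueable A B \<and>
               rotate i lam = connected_sum A B"
proof -
  define m where "m = length lam"
  define A where "A = take (j - i + 1) (drop i lam)"
  define B where "B = drop j lam @ take (i + 1) lam"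
  have j2: "i + 2 \<le> j" using nm ij unfolding facets_meet_def by auto
  have j3: "j \<le> i + m - 2"
  proof (rule ccontr)
    assume "\<not> j \<le> i + m - 2"
    then have "i = 0" "j = m - 1" using ij m_def by auto
    moreover have "j + 1 = m" using \<open>j = m - 1\<close> ij m_def by simp
    then have "(j + 1) mod m = 0" by simp
    ultimately show False using nm unfolding facets_meet_def m_def by auto
  qed
  have lA: "length A = j - i + 1" using ij unfolding A_def by simp
  have lB: "length B = m - j + i + 1" using ij unfolding B_def m_def by simp
  have An: "\<And>k. k \<le> j - i \<Longrightarrow> A ! k = lam ! (i + k)"
    using ij unfolding A_def by simp
  have Bn: "B ! k = lam ! ((j + k) mod m)" if k: "k \<le> m - j + i" for k
  proof (cases "k < m - j")
    case True
    then show ?thesis using ij unfolding B_def m_def by (simp add: nth_append)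
  next
    case False
    then have e: "j + k = m + (k - (m - j))" using ij m_def by auto
    have "(j + k) mod m = k - (m - j)" unfolding e using k ij m_def by simp
    then show ?thesis using False ij k unfolding B_def m_def by (simp add: nth_append)
  qed
  have cA: "char_matrix A"
  proof (rule char_intro)
    show "3 \<le> length A" using lA j2 by simp
    fix k assume k: "k + 1 < length A"
    then have "A ! k = lam ! ((i + k) mod m)" "A ! (k+1) = lam ! ((i + k + 1) mod m)"
      using An[of k] An[of "k+1"] lA ij m_def by auto
    then show "det2 (A ! k) (A ! (k + 1)) \<in> U" using char_cyc[OF cm, of "i+k"] m_def by simp
  next
    show "det2 (A ! (length A - 1)) (A ! 0) \<in> U"
      using An[of 0] An[of "j-i"] lA ij det2_anti[OF d] by simp
  qed
  have cB: "char_matrix B"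
  proof (rule char_intro)
    show "3 \<le> length B" using lB j3 j2 by simp
    fix k assume k: "k + 1 < length B"
    then have "B ! k = lam ! ((j + k) mod m)" "B ! (k+1) = lam ! ((j + k + 1) mod m)"
      using Bn[of k] Bn[of "k+1"] lB by auto
    then show "det2 (B ! k) (B ! (k + 1)) \<in> U" using char_cyc[OF cm, of "j+k"] m_def by simp
  next
    have "(j + (m - j + i)) mod m = i" using ij m_def by simp
    then show "det2 (B ! (length B - 1)) (B ! 0) \<in> U"
      using Bn[of 0] Bn[of "m - j + i"] lB ij m_def d by simp
  qed
  have gl: "glueable A B"
    unfolding glueable_def
  proof (intro conjI)
    show ne: "A \<noteq> []" "B \<noteq> []" using lA lB by auto
    show "last A = hd B" using An[of "j-i"] lA Bn[of 0] ij m_def ne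
      by (simp add: last_conv_nth hd_conv_nth)
    show "last B = hd A"
    proof -
      have "(j + (m - j + i)) mod m = i" using ij m_def by simp
      then show ?thesis using An[of 0] lA Bn[of "m-j+i"] lB ij m_def ne
        by (simp add: last_conv_nth hd_conv_nth)
    qed
  qed
  have rot: "rotate i lam = connected_sum A B"
  proof -
    have r: "rotate i lam = drop i lam @ take i lam" using ij by (simp add: rotate_drop_take)
    have "drop i lam = take (j - i) (drop i lam) @ drop j lam"
      using ij by (metis append_take_drop_id drop_drop le_add_diff_inverse2 less_imp_le)
    moreover have "butlast A = take (j - i) (drop i lam)"
      unfolding A_def using ij by (simp add: butlast_take)
    moreover have "butlast B = drop j lam @ take i lam"
      unfolding B_def using ij by (simp add: butlast_append butlast_take)
    ultimately show ?thesis using r unfolding connected_sum_def by simp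
  qed
  show ?thesis unfolding Let_def A_def[symmetric] B_def[symmetric]
    using lA lB cA cB gl rot m_def by simp
qed


lemma pair_any:
  assumes cm: "char_matrix lam" and ab: "a < length lam" "b < length lam"
    and nm: "\<not> facets_meet (length lam) a b" and d: "det2 (lam ! a) (lam ! b) \<in> U"
  shows "\<exists>i j. i < j \<and> j < length lam \<and>
           \<not> facets_meet (length lam) i j \<and>
           det2 (lam ! i) (lam ! j) \<in> {1, -1} \<and>
           (let A = take (j - i + 1) (drop i lam);
                B = drop j lam @ take (i + 1) lam
            in length A = j - i + 1 \<and> length B = length lam - j + i + 1 \<and>
               char_matrix A \<and> char_matrix B \<and> glueable A B \<and>
               rotate i lam = connected_sum A B)"
proof -
  have "a \<noteq> b" using nm unfolding facets_meet_def by auto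
  then consider "a < b" | "b < a" by linarith
  then show ?thesis
  proof cases
    case 1
    show ?thesis
      apply (rule exI[of _ a], rule exI[of _ b])
      apply (intro conjI)
          apply (rule 1)
         apply (rule ab(2))
        apply (rule nm)
       apply (rule d)
      apply (rule pair_ok[OF cm 1 ab(2) nm d])
      done
  next
    case 2
    have nm': "\<not> facets_meet (length lam) b a" using nm unfolding facets_meet_def by auto
    have d': "det2 (lam ! b) (lam ! a) \<in> U" using det2_anti[OF d] .
    show ?thesis
      apply (rule exI[of _ b], rule exI[of _ a])
      apply (intro conjI)
          apply (rule 2)
         apply (rule ab(1))
        apply (rule nm')
       apply (rule d')
      apply (rule pair_ok[OF cm 2 ab(1) nm' d'])
      done
  qed
qed

theorem lemma4p5:
  fixes lam :: "(int \<times> int) list"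
  assumes "length lam > 4"
    and "char_matrix lam"
  shows "\<exists>i j. i < j \<and> j < length lam \<and>
           \<not> facets_meet (length lam) i j \<and>
           det2 (lam ! i) (lam ! j) \<in> {1, -1} \<and>
           (let A = take (j - i + 1) (drop i lam);
                B = drop j lam @ take (i + 1) lam
            in length A = j - i + 1 \<and> length B = length lam - j + i + 1 \<and>
               char_matrix A \<and> char_matrix B \<and> glueable A B \<and>
               rotate i lam = connected_sum A B)"
proof -
  define m where "m = length lam"
  have m5: "m \<ge> 5" using assms(1) m_def by simp
  define N where "N = (\<lambda>v::int\<times>int. fst v^2 + snd v^2)"
  define S where "S = (\<lambda>k. N (lam ! k)) ` {..<m}"
  have "0 \<in> {..<m}" using m5 by simp
  then have fS: "finite S" "S \<noteq> {}" unfolding S_def by auto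
  then have "Max S \<in> S" by simp
  then obtain i0 where i0': "i0 \<in> {..<m}" "Max S = N (lam ! i0)" unfolding S_def by blast
  have i0: "i0 < m" "N (lam ! i0) = Max S" using i0' by auto
  have mx: "N (lam ! k) \<le> N (lam ! i0)" if "k < m" for k
  proof -
    have "N (lam ! k) \<in> S" using that unfolding S_def by blast
    then show ?thesis using Max_ge[OF fS(1)] i0(2) by metis
  qed
  define ia where "ia = (i0 + (m - 1)) mod m"
  define ic where "ic = (i0 + 1) mod m"
  define idd where "idd = (i0 + 2) mod m"
  have m0: "m > 0" using m5 by simp
  have lt: "ia < m" "ic < m" "idd < m" unfolding ia_def ic_def idd_def using m0 by simp_all
  have i0m: "i0 mod m = i0" using i0 by simp
  have e1: "(i0 + (m - 1) + 1) mod m = i0" using m5 i0 by (simp add: i0m)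
  have d1: "det2 (lam ! ia) (lam ! i0) \<in> U"
    using char_cyc[OF assms(2), of "i0 + (m - 1)"] e1 unfolding ia_def m_def by simp
  have d2: "det2 (lam ! i0) (lam ! ic) \<in> U"
    using char_cyc[OF assms(2), of "i0"] i0m unfolding ic_def m_def by simp
  have d3: "det2 (lam ! ic) (lam ! idd) \<in> U"
    using char_cyc[OF assms(2), of "i0+1"] unfolding ic_def idd_def m_def
    by (simp add: mod_Suc_eq add.assoc)
  have key: "det2 (lam ! ia) (lam ! ic) \<in> {1,-1,0}"
    using det2_key[OF d1 d2] mx[OF lt(1)] mx[OF lt(2)] unfolding N_def by simp
  have r0: "(i0 + 0) mod m = i0" using i0m by simp
  have "(ia + 1) mod m = (i0 + (m - 1) + 1) mod m" unfolding ia_def by (simp add: mod_Suc_eq)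
  then have am: "(ia + 1) mod m = (i0 + 0) mod m" using e1 r0 by simp
  have cm: "(ic + 1) mod m = (i0 + 2) mod m" unfolding ic_def by (simp add: mod_Suc_eq)
  have dm: "(idd + 1) mod m = (i0 + 3) mod m" unfolding idd_def by (simp add: mod_Suc_eq numeral_3_eq_3)
  have n1: "(i0 + 1) mod m \<noteq> (i0 + (m-1)) mod m" by (rule mod_ne) (use m5 in auto)
  have n2: "(i0 + 0) mod m \<noteq> (i0 + 1) mod m" by (rule mod_ne) (use m5 in auto)
  have n3: "(i0 + 2) mod m \<noteq> (i0 + (m-1)) mod m" by (rule mod_ne) (use m5 in auto)
  have n4: "(i0 + 0) mod m \<noteq> (i0 + 2) mod m" by (rule mod_ne) (use m5 in auto)
  have n5: "(i0 + 3) mod m \<noteq> (i0 + (m-1)) mod m" by (rule mod_ne) (use m5 in auto)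
  consider "det2 (lam ! ia) (lam ! ic) \<in> U" | "det2 (lam ! ia) (lam ! ic) = 0" using key by auto
  then show ?thesis
  proof cases
    case 1
    have x1: "ia \<noteq> ic" using n1 unfolding ia_def ic_def by metis
    have x2: "(ia + 1) mod m \<noteq> ic" unfolding am ic_def by (rule n2)
    have x3: "(ic + 1) mod m \<noteq> ia" unfolding cm ia_def by (rule n3)
    have nm: "\<not> facets_meet m ia ic" unfolding facets_meet_def using x1 x2 x3 by metis
    show ?thesis using pair_any[OF assms(2) lt(1,2)[unfolded m_def] nm[unfolded m_def] 1] .
  next
    case 2
    have dd: "det2 (lam ! ia) (lam ! idd) \<in> U" using det2_zero[OF d1 d2 2 d3] .
    have x1: "ia \<noteq> idd" using n3 unfolding ia_def idd_def by metis
    have x2: "(ia + 1) mod m \<noteq> idd" unfolding am idd_def by (rule n4)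
    have x3: "(idd + 1) mod m \<noteq> ia" unfolding dm ia_def by (rule n5)
    have nm: "\<not> facets_meet m ia idd" unfolding facets_meet_def using x1 x2 x3 by metis
    show ?thesis using pair_any[OF assms(2) lt(1,3)[unfolded m_def] nm[unfolded m_def] dd] .
  qed
qed

end
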